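(* In the setting described in the context, let $w\in\mathbb{Z}^{n-1}_{\ge0}$ and $z\in M$, and assume that $R_w$ contains two coprime monomials. Then $\dim_{\mathbb{K}}R_{w+z}=\dim_{\mathbb{K}}R_w+\dim_{\mathbb{K}}R_z-1$.
   Context: Let $\mathbb{K}$ be a field. A Newton polyhedron is the convex hull of $S+\mathbb{R}^n_{\ge0}$ for a nonempty finite $S\subset\mathbb{Z}^n_{\ge0}$; for $\xi\in\mathbb{R}^n_{\ge0}$ the face $\Delta^\xi=\{a\in\Delta:\langle\xi,a\rangle=\min_{b\in\Delta}\langle\xi,b\rangle\}$ is compact iff $\xi\in\mathbb{R}^n_{>0}$; a loose edge is a compact 1-dimensional face not contained in any compact face of dimension $\ge2$. Let $\Delta$ be a Newton polyhedron with a loose edge $E$, let $c\in\mathbb{Z}^n$ be a primitive lattice vector parallel to $E$, and let $\xi_1,\dots,\xi_{n-1}\in\mathbb{Z}^n_{\ge0}$ be linearly independent vectors with $\langle\xi_i,c\rangle=0$. For $\alpha\in\mathbb{Z}^n$ put $\omega(\underline x^\alpha)=(\langle\xi_1,\alpha\rangle,\dots,\langle\xi_{n-1},\alpha\rangle)$ (the weight). For $w\in\mathbb{Z}^{n-1}_{\ge0}$ let $R_w\subset\mathbb{K}[x_1,\dots,x_n]$ be the $\mathbb{K}$-span of the monomials $\underline x^\alpha$, $\alpha\in\mathbb{Z}^n_{\ge0}$, with $\omega(\underline x^\alpha)=w$ (so $\mathbb{K}[x_1,\dots,x_n]=\bigoplus_w R_w$ is graded and each $R_w$ is finite-dimensional).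 Let $M$ be the set of $z\in\mathbb{Z}^{n-1}_{\ge0}$ for which there is $\alpha\in\mathbb{Z}^n$ with $\omega(\underline x^\alpha)=z$ and $\langle\xi,\alpha\rangle\ge0$ for all $\xi\in\mathbb{R}^n_{\ge0}$ orthogonal to $E$ (i.e. to $c$). *)

theory Defs
  imports "HOL-Analysis.Analysis"
begin

text \<open>Points of R^n / Z^n are vectors indexed by a finite type 'n (n = CARD('n)).
  Monomials x^alpha of K[x_1..x_n] are identified with their exponent vectors alpha :: nat^'n.\<close>

definition rvec :: "int^'n \<Rightarrow> real^'n" where
  "rvec v = (\<chi> j. real_of_int (v $ j))"

definition nvec :: "nat^'n \<Rightarrow> real^'n" where
  "nvec v = (\<chi> j. real (v $ j))"

definition nonneg_vec :: "real^'n \<Rightarrow> bool" where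
  "nonneg_vec x \<longleftrightarrow> (\<forall>j. 0 \<le> x $ j)"

definition newton_polyhedron :: "(nat^'n) set \<Rightarrow> (real^'n) set" where
  "newton_polyhedron S = convex hull {nvec s + r | s r. s \<in> S \<and> nonneg_vec r}"

definition is_newton_polyhedron :: "(real^'n) set \<Rightarrow> bool" where
  "is_newton_polyhedron D \<longleftrightarrow> (\<exists>S. finite S \<and> S \<noteq> {} \<and> D = newton_polyhedron S)"

definition face_of_dir :: "(real^'n) set \<Rightarrow> real^'n \<Rightarrow> (real^'n) set" where
  "face_of_dir D \<xi> = {a \<in> D. \<xi> \<bullet> a = (INF b\<in>D. \<xi> \<bullet> b)}"

definition compact_face :: "(real^'n) set \<Rightarrow> (real^'n) set \<Rightarrow> bool" where
  "compact_face D F \<longleftrightarrow> (\<exists>\<xi>. nonneg_vec \<xi> \<and> F = face_of_dir D \<xi>) \<and> compact F"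

definition loose_edge :: "(real^'n) set \<Rightarrow> (real^'n) set \<Rightarrow> bool" where
  "loose_edge D E \<longleftrightarrow> compact_face D E \<and> aff_dim E = 1 \<and>
     \<not> (\<exists>F. compact_face D F \<and> aff_dim F \<ge> 2 \<and> E \<subseteq> F)"

definition primitive_lattice_vec :: "int^'n \<Rightarrow> bool" where
  "primitive_lattice_vec c \<longleftrightarrow> c \<noteq> 0 \<and> (\<forall>k::int. (\<forall>j. k dvd c $ j) \<longrightarrow> \<bar>k\<bar> = 1)"

definition parallel_to :: "int^'n \<Rightarrow> (real^'n) set \<Rightarrow> bool" where
  "parallel_to c E \<longleftrightarrow> (\<forall>a\<in>E. \<forall>b\<in>E. \<exists>t::real. b - a = t *\<^sub>R rvec c)"

definition weight :: "(nat \<Rightarrow> int^'n) \<Rightarrow> int^'n \<Rightarrow> nat \<Rightarrow> int" where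
  "weight \<xi> \<alpha> i = (\<Sum>j\<in>UNIV. \<xi> i $ j * \<alpha> $ j)"

definition ivec :: "nat^'n \<Rightarrow> int^'n" where
  "ivec v = (\<chi> j. int (v $ j))"

text \<open>Exponent vectors of the monomials spanning R_w (w indexed by i < n-1).\<close>
definition graded_monomials :: "(nat \<Rightarrow> int^'n) \<Rightarrow> (nat \<Rightarrow> nat) \<Rightarrow> (nat^'n) set" where
  "graded_monomials \<xi> w = {\<alpha>. \<forall>i < CARD('n) - 1. weight \<xi> (ivec \<alpha>) i = int (w i)}"

text \<open>dim_K R_w = number of monomials of weight w (they form a K-basis of R_w).\<close>
definition dimR :: "(nat \<Rightarrow> int^'n) \<Rightarrow> (nat \<Rightarrow> nat) \<Rightarrow> nat" where
  "dimR \<xi> w = card (graded_monomials \<xi> w)"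

text \<open>Monomials x^a, x^b are coprime iff gcd(x^a,x^b) = x^min(a,b) = 1.\<close>
definition coprime_monomials :: "nat^'n \<Rightarrow> nat^'n \<Rightarrow> bool" where
  "coprime_monomials a b \<longleftrightarrow> (\<forall>j. min (a $ j) (b $ j) = 0)"

definition setM :: "(nat \<Rightarrow> int^'n) \<Rightarrow> int^'n \<Rightarrow> (nat \<Rightarrow> nat) set" where
  "setM \<xi> c = {z. \<exists>\<alpha>::int^'n. (\<forall>i < CARD('n) - 1. weight \<xi> \<alpha> i = int (z i)) \<and>
       (\<forall>\<eta>::real^'n. nonneg_vec \<eta> \<longrightarrow> \<eta> \<bullet> rvec c = 0 \<longrightarrow> 0 \<le> \<eta> \<bullet> rvec \<alpha>)}"

end

theory Submission
  imports Defs
begin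


lemma le_div_iff_int: "(0::int) < d \<Longrightarrow> k \<le> g div d \<longleftrightarrow> k * d \<le> g"
  by (smt (verit, del_insts) mod_div_decomp nonzero_mult_div_cancel_right
    pos_mod_sign zdiv_mono1)

definition Sset :: "int^'n \<Rightarrow> int^'n \<Rightarrow> int set" where
  "Sset c \<gamma> = {k. \<forall>j. 0 \<le> \<gamma>$j + k * c$j}"

lemma S_card_shift:
  fixes c \<gamma> :: "int^'n" and m :: int
  assumes P: "\<exists>i. c$i > 0" and N: "\<exists>j. c$j < 0"
    and Z: "\<forall>j. c$j = 0 \<longrightarrow> 0 \<le> \<gamma>$j"
    and PN: "\<forall>i j. c$i > 0 \<longrightarrow> c$j < 0 \<longrightarrow> 0 \<le> (- c$j) * \<gamma>$i + c$i * \<gamma>$j"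
    and m: "m \<ge> 0"
  shows "card (Sset c (\<chi> j. \<gamma>$j + m * max 0 (- c$j))) = card (Sset c \<gamma>) + nat m"
proof -
  define Ps where "Ps = {i. c$i > 0}"
  define Ns where "Ns = {i. c$i < 0}"
  have fP: "finite Ps" "Ps \<noteq> {}" using P unfolding Ps_def by auto
  have fN: "finite Ns" "Ns \<noteq> {}" using N unfolding Ns_def by auto
  define l where "l = Max ((\<lambda>i. - (\<gamma>$i div c$i)) ` Ps)"
  define u where "u = Min ((\<lambda>j. \<gamma>$j div (- c$j)) ` Ns)"
  have lo: "(\<forall>i\<in>Ps. 0 \<le> \<gamma>$i + k * c$i) \<longleftrightarrow> l \<le> k" for k
  proof -
    have "0 \<le> \<gamma>$i + k * c$i \<longleftrightarrow> - (\<gamma>$i div c$i) \<le> k" if "i \<in> Ps" for i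
    proof -
      have "0 < c$i" using that Ps_def by auto
      then have "-k \<le> \<gamma>$i div c$i \<longleftrightarrow> -k * c$i \<le> \<gamma>$i" by (rule le_div_iff_int)
      then show ?thesis by auto
    qed
    then show ?thesis unfolding l_def using fP by (auto simp: Max_le_iff)
  qed
  have up: "(\<forall>j\<in>Ns. 0 \<le> \<gamma>$j + k * c$j) \<longleftrightarrow> k \<le> u" for k
  proof -
    have "0 \<le> \<gamma>$j + k * c$j \<longleftrightarrow> k \<le> \<gamma>$j div (- c$j)" if "j \<in> Ns" for j
    proof -
      have "0 < - c$j" using that Ns_def by auto
      then have "k \<le> \<gamma>$j div (- c$j) \<longleftrightarrow> k * (- c$j) \<le> \<gamma>$j" by (rule le_div_iff_int)
      then show ?thesis by auto
    qed
    then show ?thesis unfolding u_def using fN by (auto simp: Min_ge_iff)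
  qed
  have split: "(\<forall>j. Q j) \<longleftrightarrow> (\<forall>j\<in>Ps. Q j) \<and> (\<forall>j\<in>Ns. Q j) \<and> (\<forall>j. c$j = 0 \<longrightarrow> Q j)" for Q
    unfolding Ps_def Ns_def by (metis linorder_neqE_linordered_idom mem_Collect_eq)
  have S1: "Sset c \<gamma> = {l..u}"
  proof -
    have "k \<in> Sset c \<gamma> \<longleftrightarrow> l \<le> k \<and> k \<le> u" for k
    proof -
      have "k \<in> Sset c \<gamma> \<longleftrightarrow> (\<forall>j\<in>Ps. 0 \<le> \<gamma>$j + k * c$j) \<and> (\<forall>j\<in>Ns. 0 \<le> \<gamma>$j + k * c$j)
          \<and> (\<forall>j. c$j = 0 \<longrightarrow> 0 \<le> \<gamma>$j + k * c$j)"
        unfolding Sset_def mem_Collect_eq by (rule split)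
      also have "\<dots> \<longleftrightarrow> l \<le> k \<and> k \<le> u" unfolding lo up using Z by simp
      finally show ?thesis .
    qed
    then show ?thesis by (intro set_eqI) simp
  qed
  have S2: "Sset c (\<chi> j. \<gamma>$j + m * max 0 (- c$j)) = {l..u+m}"
  proof -
    have eP: "(\<forall>i\<in>Ps. 0 \<le> (\<chi> j. \<gamma>$j + m * max 0 (- c$j))$i + k * c$i) \<longleftrightarrow> l \<le> k" for k
      using lo[of k] unfolding Ps_def by auto
    have eN: "(\<forall>i\<in>Ns. 0 \<le> (\<chi> j. \<gamma>$j + m * max 0 (- c$j))$i + k * c$i) \<longleftrightarrow> k - m \<le> u" for k
    proof -
      have "(\<forall>i\<in>Ns. 0 \<le> (\<chi> j. \<gamma>$j + m * max 0 (- c$j))$i + k * c$i) \<longleftrightarrow>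
            (\<forall>i\<in>Ns. 0 \<le> \<gamma>$i + (k - m) * c$i)"
        unfolding Ns_def by (auto simp: algebra_simps)
      then show ?thesis using up by simp
    qed
    have "k \<in> Sset c (\<chi> j. \<gamma>$j + m * max 0 (- c$j)) \<longleftrightarrow> l \<le> k \<and> k \<le> u + m" for k
    proof -
      have "k \<in> Sset c (\<chi> j. \<gamma>$j + m * max 0 (- c$j)) \<longleftrightarrow>
          (\<forall>j\<in>Ps. 0 \<le> (\<chi> j. \<gamma>$j + m * max 0 (- c$j))$j + k * c$j)
          \<and> (\<forall>j\<in>Ns. 0 \<le> (\<chi> j. \<gamma>$j + m * max 0 (- c$j))$j + k * c$j)
          \<and> (\<forall>j. c$j = 0 \<longrightarrow> 0 \<le> (\<chi> j. \<gamma>$j + m * max 0 (- c$j))$j + k * c$j)"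
        unfolding Sset_def mem_Collect_eq by (rule split)
      also have "\<dots> \<longleftrightarrow> l \<le> k \<and> k - m \<le> u" unfolding eP eN using Z by simp
      finally show ?thesis by arith
    qed
    then show ?thesis by (intro set_eqI) simp
  qed
  have lu: "l \<le> u + 1"
  proof -
    have "- (\<gamma>$i div c$i) \<le> \<gamma>$j div (- c$j) + 1" if i: "i \<in> Ps" and j: "j \<in> Ns" for i j
    proof -
      define p where "p = \<gamma>$i div c$i"
      define q where "q = \<gamma>$j div (- c$j)"
      have ci: "0 < c$i" and dj: "0 < - c$j" using i j Ps_def Ns_def by auto
      have h1: "\<gamma>$i < (p+1) * c$i" unfolding p_def using ci
        by (smt (verit, best) le_div_iff_int)
      have h2: "\<gamma>$j < (q+1) * (- c$j)" unfolding q_def using dj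
        by (smt (verit, best) le_div_iff_int)
      have "(- c$j) * \<gamma>$i < (- c$j) * ((p+1) * c$i)" using h1 dj by simp
      moreover have "c$i * \<gamma>$j < c$i * ((q+1) * (- c$j))" using mult_strict_left_mono[OF h2 ci] by simp
      moreover have "0 \<le> (- c$j) * \<gamma>$i + c$i * \<gamma>$j" using PN ci dj by auto
      ultimately have "0 < (c$i * (- c$j)) * (p + q + 2)" by (simp add: algebra_simps)
      moreover have cd: "0 < c$i * (- c$j)" using mult_pos_pos[OF ci dj] .
      ultimately have "0 < p + q + 2" using zero_less_mult_pos[of "c$i * (- c$j)" "p+q+2"] by blast
      then show ?thesis unfolding p_def q_def by simp
    qed
    then have "- (\<gamma>$i div c$i) - 1 \<le> u" if "i \<in> Ps" for i
      unfolding u_def using fN that by (subst Min_ge_iff) force+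
    then have "- (\<gamma>$i div c$i) \<le> u + 1" if "i \<in> Ps" for i using that by force
    then show ?thesis unfolding l_def using fP
      by (subst Max_le_iff) force+
  qed
  show ?thesis unfolding S1 S2 using lu m by simp
qed



lemma inner_rvec: "rvec x \<bullet> rvec y = real_of_int (\<Sum>j\<in>UNIV. x$j * y$j)"
  unfolding rvec_def inner_vec_def by simp

lemma dimvec: "DIM(real^'n) = CARD('n)" by simp

lemma kernel:
  fixes c u v :: "int^'n" and \<xi> :: "nat \<Rightarrow> int^'n"
  assumes prim: "primitive_lattice_vec c"
    and orth: "\<forall>i < CARD('n) - 1. rvec (\<xi> i) \<bullet> rvec c = 0"
    and inj: "inj_on (\<lambda>i. rvec (\<xi> i)) {..< CARD('n) - 1}"
    and ind: "independent ((\<lambda>i. rvec (\<xi> i)) ` {..< CARD('n) - 1})"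
    and eq: "\<forall>i < CARD('n) - 1. weight \<xi> u i = weight \<xi> v i"
  shows "\<exists>k. v = (\<chi> j. u$j + k * c$j)"
proof -
  define B where "B = (\<lambda>i. rvec (\<xi> i)) ` {..< CARD('n) - 1}"
  have cB: "card B = CARD('n) - 1" unfolding B_def using inj by (simp add: card_image)
  have dB: "dim (span B) = CARD('n) - 1" using ind cB unfolding B_def by (simp add: dim_span dim_eq_card_independent)
  define W where "W = {y \<in> UNIV. \<forall>x\<in>span B. orthogonal x y}"
  have "dim W + dim (span B) = dim (UNIV :: (real^'n) set)"
    unfolding W_def by (rule dim_subspace_orthogonal_to_vectors) auto
  then have e: "dim W + (CARD('n) - 1) = CARD('n)" using dB by (simp add: dim_UNIV)
  have "0 < CARD('n)" by simp
  then have dW: "dim W = 1" using e by arith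
  have inW: "y \<in> W" if "\<forall>b\<in>B. b \<bullet> y = 0" for y
  proof -
    have "orthogonal x y" if x: "x \<in> span B" for x
    proof -
      have "orthogonal y x"
        by (rule orthogonal_to_span[OF x]) (use \<open>\<forall>b\<in>B. b \<bullet> y = 0\<close> in \<open>auto simp: orthogonal_def inner_commute\<close>)
      then show ?thesis by (simp add: orthogonal_commute)
    qed
    then show ?thesis unfolding W_def by auto
  qed
  have cW: "rvec c \<in> W" using orth by (intro inW) (auto simp: B_def)
  define d where "d = rvec v - rvec u"
  have dW': "d \<in> W"
  proof (intro inW ballI)
    fix b assume "b \<in> B"
    then obtain i where i: "i < CARD('n) - 1" "b = rvec (\<xi> i)" unfolding B_def by auto
    have "b \<bullet> d = rvec (\<xi> i) \<bullet> rvec v - rvec (\<xi> i) \<bullet> rvec u" unfolding d_def i by (simp add: inner_diff_right)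
    also have "\<dots> = 0" using eq i by (simp add: inner_rvec weight_def)
    finally show "b \<bullet> d = 0" .
  qed
  have c0: "c \<noteq> 0" using prim unfolding primitive_lattice_vec_def by auto
  have rc0: "rvec c \<noteq> 0"
  proof
    assume "rvec c = 0"
    then have "c$j = 0" for j by (auto simp: rvec_def vec_eq_iff)
    then show False using c0 by (auto simp: vec_eq_iff)
  qed
  have "d \<in> span {rvec c}"
  proof (rule ccontr)
    assume nd: "d \<notin> span {rvec c}"
    have "independent {d, rvec c}"
      using nd rc0 by (intro independent_insertI) (auto simp: independent_insert independent_empty)
    moreover have "d \<noteq> rvec c" using nd by (auto intro: span_base)
    ultimately have "card {d, rvec c} \<le> dim W" using dW' cW by (intro independent_card_le_dim) auto
    then show False using dW \<open>d \<noteq> rvec c\<close> by simp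
  qed
  then obtain t where t: "d = t *\<^sub>R rvec c" by (auto simp: span_singleton)
  define \<delta> where "\<delta> = v - u"
  have tj: "real_of_int (\<delta>$j) = t * real_of_int (c$j)" for j
    using arg_cong[OF t, of "\<lambda>x. x$j"] unfolding d_def \<delta>_def rvec_def by simp
  obtain j0 where j0: "c$j0 \<noteq> 0" using c0 by (auto simp: vec_eq_iff)
  define p where "p = \<delta>$j0"
  define q where "q = c$j0"
  have rel: "\<delta>$j * q = p * c$j" for j
  proof -
    have "real_of_int (\<delta>$j * q) = real_of_int (p * c$j)"
      unfolding p_def q_def using tj[of j] tj[of j0] by simp
    then show ?thesis by linarith
  qed
  have g0: "gcd p q \<noteq> 0" using j0 q_def by simp
  define g where "g = gcd p q"
  have g0': "g \<noteq> 0" using g0 g_def by simp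
  obtain p' q' where pq: "p = p' * g" "q = q' * g" "coprime p' q'"
    using gcd_coprime_exists[OF g0] unfolding g_def[symmetric] by blast
  have rel': "\<delta>$j * q' = p' * c$j" for j
  proof -
    have "(\<delta>$j * q') * g = \<delta>$j * q" using pq(2) by (simp add: mult.assoc)
    also have "\<dots> = p * c$j" by (rule rel)
    also have "\<dots> = (p' * c$j) * g" using pq(1) by (simp add: algebra_simps)
    finally show ?thesis using g0' by simp
  qed
  have "q' dvd c$j" for j
  proof -
    have "q' dvd p' * c$j" using rel'[of j] by (metis dvd_triv_right)
    then show ?thesis using pq(3) by (simp add: coprime_commute coprime_dvd_mult_right_iff)
  qed
  then have q1: "\<bar>q'\<bar> = 1" using prim unfolding primitive_lattice_vec_def by blast
  then have qq: "q' * q' = 1" by (metis abs_mult_self_eq mult_1_right)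
  have "v$j = u$j + (p' * q') * c$j" for j
  proof -
    have "\<delta>$j = \<delta>$j * q' * q'" using qq by (simp add: mult.assoc)
    also have "\<dots> = (p' * q') * c$j" using rel'[of j] by (simp add: algebra_simps)
    finally show ?thesis unfolding \<delta>_def by simp
  qed
  then show ?thesis by (intro exI[of _ "p' * q'"]) (simp add: vec_eq_iff)
qed



lemma newton_up:
  assumes "is_newton_polyhedron D" "x \<in> D" "nonneg_vec r"
  shows "x + r \<in> D"
proof -
  obtain S where D: "D = newton_polyhedron S" using assms(1) unfolding is_newton_polyhedron_def by blast
  define P where "P = {nvec s + r | s r. s \<in> S \<and> nonneg_vec r}"
  have DP: "D = convex hull P" unfolding D newton_polyhedron_def P_def by simp
  have sub: "(+) r ` P \<subseteq> P"
  proof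
    fix y assume "y \<in> (+) r ` P"
    then obtain s r' where y: "y = r + (nvec s + r')" "s \<in> S" "nonneg_vec r'" unfolding P_def by blast
    have "nonneg_vec (r' + r)" using y(3) assms(3) unfolding nonneg_vec_def by simp
    moreover have "y = nvec s + (r' + r)" using y(1) by (simp add: algebra_simps)
    ultimately show "y \<in> P" unfolding P_def using y(2) by blast
  qed
  have "x + r \<in> (+) r ` (convex hull P)" using assms(2) DP by (auto simp: add.commute)
  also have "\<dots> = convex hull ((+) r ` P)" by (simp add: convex_hull_translation)
  also have "\<dots> \<subseteq> convex hull P" using sub by (rule hull_mono)
  finally show ?thesis using DP by simp
qed

lemma mixed_sign:
  fixes D E :: "(real^'n) set" and c :: "int^'n"
  assumes ND: "is_newton_polyhedron D" and LE: "loose_edge D E" and par: "parallel_to c E"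
  shows "(\<exists>i. c$i > 0) \<and> (\<exists>j. c$j < 0)"
proof (rule ccontr)
  assume H: "\<not> ((\<exists>i. c$i > 0) \<and> (\<exists>j. c$j < 0))"
  obtain \<xi>0 where x0: "nonneg_vec \<xi>0" "E = face_of_dir D \<xi>0" and cE: "compact E" and aE: "aff_dim E = 1"
    using LE unfolding loose_edge_def compact_face_def by blast
  obtain a b where ab: "a \<in> E" "b \<in> E" "a \<noteq> b"
  proof -
    have "\<not> (E = {} \<or> (\<exists>a. E = {a}))" using aE by auto
    then show ?thesis using that by blast
  qed
  obtain t where t: "b - a = t *\<^sub>R rvec c" using par ab unfolding parallel_to_def by blast
  have t0: "t \<noteq> 0" and rc0: "rvec c \<noteq> 0" using t ab(3) by auto
  define I where "I = (INF y\<in>D. \<xi>0 \<bullet> y)"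
  have aD: "a \<in> D" and aI: "\<xi>0 \<bullet> a = I" and bI: "\<xi>0 \<bullet> b = I"
    using ab x0(2) unfolding face_of_dir_def I_def by auto
  have "\<xi>0 \<bullet> (b - a) = 0" using aI bI by (simp add: inner_diff_right)
  then have orth: "\<xi>0 \<bullet> rvec c = 0" using t t0 by simp
  obtain v where v: "nonneg_vec v" "v \<noteq> 0" "\<xi>0 \<bullet> v = 0"
  proof (cases "\<forall>j. c$j \<ge> 0")
    case True
    then have "nonneg_vec (rvec c)" unfolding nonneg_vec_def rvec_def by simp
    then show ?thesis using that rc0 orth by blast
  next
    case False
    then have "\<forall>j. c$j \<le> 0" using H by (meson not_le)
    then have "nonneg_vec (- rvec c)" unfolding nonneg_vec_def rvec_def by simp
    then show ?thesis using that[of "- rvec c"] rc0 orth by simp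
  qed
  have inE: "a + s *\<^sub>R v \<in> E" if s: "s \<ge> 0" for s
  proof -
    have "nonneg_vec (s *\<^sub>R v)" using v(1) s unfolding nonneg_vec_def by simp
    then have "a + s *\<^sub>R v \<in> D" using newton_up[OF ND aD] by blast
    moreover have "\<xi>0 \<bullet> (a + s *\<^sub>R v) = I" using aI v(3) by (simp add: inner_add_right)
    ultimately show ?thesis unfolding x0(2) face_of_dir_def I_def by simp
  qed
  obtain B where B: "\<forall>x\<in>E. norm x \<le> B" using compact_imp_bounded[OF cE] unfolding bounded_iff by blast
  have nv: "norm v > 0" using v(2) by simp
  define s where "s = (B + norm a + 1) / norm v"
  have "0 \<le> B" using B ab(1) by (meson norm_ge_zero order_trans)
  then have s0: "s \<ge> 0" unfolding s_def using nv by simp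
  have "norm (s *\<^sub>R v) = B + norm a + 1" unfolding s_def using nv \<open>0 \<le> B\<close> by simp
  moreover have "norm (s *\<^sub>R v) \<le> norm (a + s *\<^sub>R v) + norm a"
    by (metis add_diff_cancel_left' norm_triangle_ineq4 add.commute)
  moreover have "norm (a + s *\<^sub>R v) \<le> B" using B inE[OF s0] by blast
  ultimately show False by linarith
qed



lemma weight_add: "weight \<xi> (\<chi> j. u$j + k * c$j) i = weight \<xi> u i + k * weight \<xi> c i"
  unfolding weight_def by (simp add: algebra_simps sum.distrib sum_distrib_left)

lemma weight_add2: "weight \<xi> (\<chi> j. u$j + v$j) i = weight \<xi> u i + weight \<xi> v i"
  unfolding weight_def by (simp add: algebra_simps sum.distrib)

lemma card_GM:
  fixes c \<alpha> :: "int^'n" and \<xi> :: "nat \<Rightarrow> int^'n" and z' :: "nat \<Rightarrow> nat"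
  assumes prim: "primitive_lattice_vec c"
    and orth: "\<forall>i < CARD('n) - 1. rvec (\<xi> i) \<bullet> rvec c = 0"
    and inj: "inj_on (\<lambda>i. rvec (\<xi> i)) {..< CARD('n) - 1}"
    and ind: "independent ((\<lambda>i. rvec (\<xi> i)) ` {..< CARD('n) - 1})"
    and wa: "\<forall>i < CARD('n) - 1. weight \<xi> \<alpha> i = int (z' i)"
  shows "card (graded_monomials \<xi> z') = card (Sset c \<alpha>)"
proof -
  have wc: "weight \<xi> c i = 0" if "i < CARD('n) - 1" for i
    using orth[rule_format, OF that] unfolding inner_rvec weight_def by (simp only: of_int_eq_0_iff)
  define f where "f k = (\<chi> j. nat (\<alpha>$j + k * c$j))" for k
  have ivf: "ivec (f k) = (\<chi> j. \<alpha>$j + k * c$j)" if "k \<in> Sset c \<alpha>" for k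
    using that unfolding Sset_def f_def ivec_def by (simp add: vec_eq_iff)
  have img: "graded_monomials \<xi> z' = f ` Sset c \<alpha>"
  proof
    show "f ` Sset c \<alpha> \<subseteq> graded_monomials \<xi> z'"
    proof
      fix x assume "x \<in> f ` Sset c \<alpha>"
      then obtain k where k: "k \<in> Sset c \<alpha>" "x = f k" by blast
      show "x \<in> graded_monomials \<xi> z'"
      proof -
        have "weight \<xi> (ivec x) i = int (z' i)" if i: "i < CARD('n) - 1" for i
          unfolding k(2) ivf[OF k(1)] weight_add[of \<xi> \<alpha> k c i] wc[OF i] using wa i by simp
        then show ?thesis unfolding graded_monomials_def by simp
      qed
    qed
    show "graded_monomials \<xi> z' \<subseteq> f ` Sset c \<alpha>"
    proof
      fix \<beta> assume b: "\<beta> \<in> graded_monomials \<xi> z'"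
      have "\<forall>i < CARD('n) - 1. weight \<xi> \<alpha> i = weight \<xi> (ivec \<beta>) i"
        using b wa unfolding graded_monomials_def by simp
      then obtain k where k: "ivec \<beta> = (\<chi> j. \<alpha>$j + k * c$j)"
        using kernel[OF prim orth inj ind] by blast
      have kS: "k \<in> Sset c \<alpha>" unfolding Sset_def
      proof (safe)
        fix j have "ivec \<beta> $ j \<ge> 0" unfolding ivec_def by simp
        then show "0 \<le> \<alpha>$j + k * c$j" using k by simp
      qed
      have "\<beta> = f k" using k unfolding f_def ivec_def
        by (simp add: vec_eq_iff) (metis nat_int vec_lambda_beta)
      then show "\<beta> \<in> f ` Sset c \<alpha>" using kS by blast
    qed
  qed
  have c0: "c \<noteq> 0" using prim unfolding primitive_lattice_vec_def by auto
  obtain j0 where j0: "c$j0 \<noteq> 0" using c0 by (auto simp: vec_eq_iff)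
  have "inj_on f (Sset c \<alpha>)"
  proof
    fix k1 k2 assume k: "k1 \<in> Sset c \<alpha>" "k2 \<in> Sset c \<alpha>" "f k1 = f k2"
    then have "ivec (f k1) $ j0 = ivec (f k2) $ j0" by simp
    then have "\<alpha>$j0 + k1 * c$j0 = \<alpha>$j0 + k2 * c$j0" using ivf[OF k(1)] ivf[OF k(2)] by simp
    then show "k1 = k2" using j0 by simp
  qed
  then show ?thesis unfolding img by (simp add: card_image)
qed

lemma coprime_form:
  fixes a b :: "nat^'n" and c :: "int^'n" and m :: int
  assumes cp: "coprime_monomials a b" and ab: "ivec b = (\<chi> j. ivec a $ j + m * c$j)" and m: "m \<ge> 0"
  shows "ivec a = (\<chi> j. (0::int^'n)$j + m * max 0 (- c$j))"
proof -
  have "int (a$j) = m * max 0 (- c$j)" for j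
  proof -
    have bj: "int (b$j) = int (a$j) + m * c$j" using arg_cong[OF ab, of "\<lambda>x. x$j"] by (simp add: ivec_def)
    have mn: "min (a$j) (b$j) = 0" using cp unfolding coprime_monomials_def by blast
    consider "c$j > 0" | "c$j = 0" | "c$j < 0" by linarith
    then show ?thesis
    proof cases
      case 1
      show ?thesis
      proof (cases "m = 0")
        case True then show ?thesis using bj mn by simp
      next
        case False
        then have "m * c$j > 0" using m 1 by simp
        then have "b$j > a$j" using bj by linarith
        then show ?thesis using mn 1 by (simp add: min_def split: if_splits)
      qed
    next
      case 2 then show ?thesis using bj mn by simp
    next
      case 3
      show ?thesis
      proof (cases "m = 0")
        case True then show ?thesis using bj mn by simp
      next
        case False
        then have "m * c$j < 0" using m 3 by (simp add: mult_pos_neg)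
        then have "b$j < a$j" using bj by linarith
        then have "b$j = 0" using mn by (simp add: min_def split: if_splits)
        then show ?thesis using bj 3 by simp
      qed
    qed
  qed
  then show ?thesis by (simp add: vec_eq_iff ivec_def)
qed

theorem lemma2p4:
  fixes D E :: "(real^'n) set" and c :: "int^'n" and \<xi> :: "nat \<Rightarrow> int^'n"
    and w z :: "nat \<Rightarrow> nat"
  assumes "is_newton_polyhedron D"
    and "loose_edge D E"
    and "primitive_lattice_vec c" and "parallel_to c E"
    and "\<forall>i < CARD('n) - 1. \<forall>j. 0 \<le> \<xi> i $ j"
    and "\<forall>i < CARD('n) - 1. rvec (\<xi> i) \<bullet> rvec c = 0"
    and "inj_on (\<lambda>i. rvec (\<xi> i)) {..< CARD('n) - 1}"
    and "independent ((\<lambda>i. rvec (\<xi> i)) ` {..< CARD('n) - 1})"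
    and "z \<in> setM \<xi> c"
    and "\<exists>a \<in> graded_monomials \<xi> w. \<exists>b \<in> graded_monomials \<xi> w. coprime_monomials a b"
  shows "dimR \<xi> (\<lambda>i. w i + z i) = dimR \<xi> w + dimR \<xi> z - 1"
proof -
  note prim = assms(3) and orth = assms(6) and inj = assms(7) and ind = assms(8)
  have ms: "(\<exists>i. c$i > 0) \<and> (\<exists>j. c$j < 0)" using mixed_sign[OF assms(1,2,4)] .
  obtain a b where a: "a \<in> graded_monomials \<xi> w" and b: "b \<in> graded_monomials \<xi> w"
    and cp: "coprime_monomials a b" using assms(10) by blast
  have "\<forall>i < CARD('n) - 1. weight \<xi> (ivec a) i = weight \<xi> (ivec b) i"
    using a b unfolding graded_monomials_def by simp
  then obtain m0 where m0: "ivec b = (\<chi> j. ivec a $ j + m0 * c$j)"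
    using kernel[OF prim orth inj ind] by blast
  obtain a' m where a': "a' \<in> graded_monomials \<xi> w" and m: "m \<ge> 0"
    and fa: "ivec a' = (\<chi> j. (0::int^'n)$j + m * max 0 (- c$j))"
  proof (cases "m0 \<ge> 0")
    case True
    show ?thesis by (rule that[OF a True coprime_form[OF cp m0 True]])
  next
    case False
    have cp': "coprime_monomials b a" using cp unfolding coprime_monomials_def by (simp add: min.commute)
    have "ivec a = (\<chi> j. ivec b $ j + (- m0) * c$j)" using m0 by (simp add: vec_eq_iff)
    then show ?thesis using that[OF b _ coprime_form[OF cp'], of "- m0"] False by simp
  qed
  have Z0: "\<forall>j. c$j = 0 \<longrightarrow> 0 \<le> (0::int^'n)$j" by simp
  have PN0: "\<forall>i j. c$i > 0 \<longrightarrow> c$j < 0 \<longrightarrow> 0 \<le> (- c$j) * (0::int^'n)$i + c$i * (0::int^'n)$j" by simp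
  have S0: "Sset c 0 = {0}"
  proof -
    obtain i j where i: "c$i > 0" and j: "c$j < 0" using ms by blast
    have "k = 0" if "k \<in> Sset c 0" for k
    proof -
      have "0 \<le> k * c$i" "0 \<le> k * c$j" using that unfolding Sset_def by auto
      then show ?thesis using i j by (simp add: zero_le_mult_iff)
    qed
    then show ?thesis unfolding Sset_def by auto
  qed
  have wa': "\<forall>i < CARD('n) - 1. weight \<xi> (ivec a') i = int (w i)"
    using a' unfolding graded_monomials_def by simp
  have dw: "dimR \<xi> w = 1 + nat m"
    unfolding dimR_def card_GM[OF prim orth inj ind wa'] fa
    using S_card_shift[OF _ _ Z0 PN0 m] ms S0 by simp
  obtain \<alpha> :: "int^'n" where wal: "\<forall>i < CARD('n) - 1. weight \<xi> \<alpha> i = int (z i)"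
    and eta: "\<forall>\<eta>::real^'n. nonneg_vec \<eta> \<longrightarrow> \<eta> \<bullet> rvec c = 0 \<longrightarrow> 0 \<le> \<eta> \<bullet> rvec \<alpha>"
    using assms(9) unfolding setM_def by blast
  have Za: "\<forall>j. c$j = 0 \<longrightarrow> 0 \<le> \<alpha>$j"
  proof (intro allI impI)
    fix j assume cj: "c$j = 0"
    have "nonneg_vec (axis j (1::real))" unfolding nonneg_vec_def axis_def by simp
    moreover have "axis j 1 \<bullet> rvec c = 0" using cj by (simp add: inner_axis' rvec_def)
    ultimately have "0 \<le> axis j 1 \<bullet> rvec \<alpha>" using eta by blast
    then show "0 \<le> \<alpha>$j" by (simp add: inner_axis' rvec_def)
  qed
  have PNa: "\<forall>i j. c$i > 0 \<longrightarrow> c$j < 0 \<longrightarrow> 0 \<le> (- c$j) * \<alpha>$i + c$i * \<alpha>$j"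
  proof (intro allI impI)
    fix i j assume ci: "c$i > 0" and cj: "c$j < 0"
    define \<eta> where "\<eta> = axis i (real_of_int (- c$j)) + axis j (real_of_int (c$i))"
    have "nonneg_vec \<eta>" unfolding nonneg_vec_def \<eta>_def axis_def using ci cj by simp
    moreover have "\<eta> \<bullet> rvec c = 0" unfolding \<eta>_def
      by (simp add: inner_add_left inner_axis' rvec_def)
    ultimately have "0 \<le> \<eta> \<bullet> rvec \<alpha>" using eta by blast
    then have "0 \<le> real_of_int ((- c$j) * \<alpha>$i + c$i * \<alpha>$j)" unfolding \<eta>_def
      by (simp add: inner_add_left inner_axis' rvec_def)
    then show "0 \<le> (- c$j) * \<alpha>$i + c$i * \<alpha>$j" by linarith
  qed
  have dz: "dimR \<xi> z = card (Sset c \<alpha>)"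
    unfolding dimR_def by (rule card_GM[OF prim orth inj ind wal])
  have wsum: "\<forall>i < CARD('n) - 1. weight \<xi> (\<chi> j. \<alpha>$j + m * max 0 (- c$j)) i = int (w i + z i)"
  proof (intro allI impI)
    fix i assume i: "i < CARD('n) - 1"
    have "(\<chi> j. \<alpha>$j + m * max 0 (- c$j)) = (\<chi> j. \<alpha>$j + ivec a' $ j)" using fa by (simp add: vec_eq_iff)
    then show "weight \<xi> (\<chi> j. \<alpha>$j + m * max 0 (- c$j)) i = int (w i + z i)"
      using weight_add2[of \<xi> \<alpha> "ivec a'" i] wal wa' i by simp
  qed
  have "dimR \<xi> (\<lambda>i. w i + z i) = card (Sset c (\<chi> j. \<alpha>$j + m * max 0 (- c$j)))"
    unfolding dimR_def by (rule card_GM[OF prim orth inj ind wsum])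
  also have "\<dots> = card (Sset c \<alpha>) + nat m" using S_card_shift[OF _ _ Za PNa m] ms by blast
  finally show ?thesis using dw dz by simp
qed


end
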